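(* Let $G$ be a connected graph with $n\ge2$ vertices, $m\ge1$ edges, maximum degree $\Delta$ and minimum degree $\delta$. Let $c=m(n^3-n^2-2mn+4m)$. If $\gamma_n\ge\frac{\sqrt c}{2n}$, then $$QE(G)\ \ge\ \frac{2\sqrt2}{3}\sqrt{\Big[2m+\tfrac12(\Delta-\delta)^2\Big]n},$$ with equality if and only if $G\cong K_3$.
   Context: All graphs are finite, simple and undirected. For a graph $G$ with $n$ vertices and $m$ edges, let $q_1\ge\cdots\ge q_n\ge0$ be the eigenvalues of the signless Laplacian $Q(G)=D(G)+A(G)$ ($D(G)$ the diagonal degree matrix, $A(G)$ the adjacency matrix). The signless Laplacian energy is $QE(G)=\sum_{i=1}^n|q_i-\frac{2m}{n}|$. Let $\gamma_1\ge\gamma_2\ge\cdots\ge\gamma_n\ge0$ denote the numbers $|q_i-\frac{2m}{n}|$, $i=1,\dots,n$, arranged in nonincreasing order. *)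

theory Defs
  imports "Jordan_Normal_Form.Char_Poly" "HOL-Library.Multiset"
begin

text \<open>A finite simple graph on the vertex set {0..<n}, given by an adjacency
relation E (only its values on {0..<n} matter).\<close>

definition simple_graph :: "nat \<Rightarrow> (nat \<Rightarrow> nat \<Rightarrow> bool) \<Rightarrow> bool" where
  "simple_graph n E \<longleftrightarrow> (\<forall>i<n. \<forall>j<n. E i j \<longleftrightarrow> E j i) \<and> (\<forall>i<n. \<not> E i i)"

definition num_edges :: "nat \<Rightarrow> (nat \<Rightarrow> nat \<Rightarrow> bool) \<Rightarrow> nat" where
  "num_edges n E = card {(i, j). i < j \<and> j < n \<and> E i j}"

definition degree :: "nat \<Rightarrow> (nat \<Rightarrow> nat \<Rightarrow> bool) \<Rightarrow> nat \<Rightarrow> nat" where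
  "degree n E i = card {j. j < n \<and> E i j}"

definition max_degree :: "nat \<Rightarrow> (nat \<Rightarrow> nat \<Rightarrow> bool) \<Rightarrow> nat" where
  "max_degree n E = Max (degree n E ` {0..<n})"

definition min_degree :: "nat \<Rightarrow> (nat \<Rightarrow> nat \<Rightarrow> bool) \<Rightarrow> nat" where
  "min_degree n E = Min (degree n E ` {0..<n})"

definition connected_graph :: "nat \<Rightarrow> (nat \<Rightarrow> nat \<Rightarrow> bool) \<Rightarrow> bool" where
  "connected_graph n E \<longleftrightarrow>
     (\<forall>i<n. \<forall>j<n. (\<lambda>x y. x < n \<and> y < n \<and> E x y)\<^sup>*\<^sup>* i j)"

definition signless_laplacian :: "nat \<Rightarrow> (nat \<Rightarrow> nat \<Rightarrow> bool) \<Rightarrow> real mat" where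
  "signless_laplacian n E =
     mat n n (\<lambda>(i, j). (if i = j then real (degree n E i) else 0) + (if E i j then 1 else 0))"

text \<open>Multiset of eigenvalues (with algebraic multiplicity) of a real matrix whose
characteristic polynomial splits over the reals (true for symmetric matrices).\<close>
definition real_spectrum :: "real mat \<Rightarrow> real multiset" where
  "real_spectrum A = (THE M. char_poly A = prod_mset (image_mset (\<lambda>a. [:- a, 1:]) M))"

definition sl_eigenvalues :: "nat \<Rightarrow> (nat \<Rightarrow> nat \<Rightarrow> bool) \<Rightarrow> real multiset" where
  "sl_eigenvalues n E = real_spectrum (signless_laplacian n E)"

text \<open>The numbers |q_i - 2m/n| as a multiset, and gamma_1 \<ge> ... \<ge> gamma_n.\<close>
definition gamma_mset :: "nat \<Rightarrow> (nat \<Rightarrow> nat \<Rightarrow> bool) \<Rightarrow> real multiset" where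
  "gamma_mset n E = image_mset (\<lambda>q. \<bar>q - 2 * real (num_edges n E) / real n\<bar>) (sl_eigenvalues n E)"

definition gamma :: "nat \<Rightarrow> (nat \<Rightarrow> nat \<Rightarrow> bool) \<Rightarrow> nat \<Rightarrow> real" where
  "gamma n E k = rev (sorted_list_of_multiset (gamma_mset n E)) ! (k - 1)"

definition QE :: "nat \<Rightarrow> (nat \<Rightarrow> nat \<Rightarrow> bool) \<Rightarrow> real" where
  "QE n E = sum_mset (gamma_mset n E)"

definition complete_graph :: "nat \<Rightarrow> nat \<Rightarrow> bool" where
  "complete_graph i j \<longleftrightarrow> i \<noteq> j"

definition graph_iso ::
  "nat \<Rightarrow> (nat \<Rightarrow> nat \<Rightarrow> bool) \<Rightarrow> nat \<Rightarrow> (nat \<Rightarrow> nat \<Rightarrow> bool) \<Rightarrow> bool" where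
  "graph_iso n E n' E' \<longleftrightarrow> (\<exists>f. bij_betw f {0..<n} {0..<n'} \<and>
      (\<forall>i<n. \<forall>j<n. E i j \<longleftrightarrow> E' (f i) (f j)))"

end

theory Submission
  imports Defs "Jordan_Normal_Form.Schur_Decomposition"
begin

definition mtr :: "'a::comm_ring_1 mat \<Rightarrow> 'a" where
  "mtr X = (\<Sum>i<dim_row X. X $$ (i,i))"

lemma mtr_comm:
  assumes X: "X \<in> carrier_mat n m" and Y: "Y \<in> carrier_mat m n"
  shows "mtr (X * Y) = mtr (Y * X)"
proof -
  have "mtr (X * Y) = (\<Sum>i<n. \<Sum>k<m. X $$ (i,k) * Y $$ (k,i))"
    unfolding mtr_def using X Y by (auto simp: scalar_prod_def row_def col_def intro!: sum.cong)
  also have "\<dots> = (\<Sum>k<m. \<Sum>i<n. Y $$ (k,i) * X $$ (i,k))"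
    by (subst sum.swap) (simp add: mult.commute)
  also have "\<dots> = mtr (Y * X)"
    unfolding mtr_def using X Y by (auto simp: scalar_prod_def row_def col_def intro!: sum.cong)
  finally show ?thesis .
qed

lemma mtr_similar:
  assumes "similar_mat_wit A B P Q" and A: "A \<in> carrier_mat n n"
  shows "mtr A = mtr B"
proof -
  from similar_mat_witD2[OF A assms(1)] have B: "B \<in> carrier_mat n n" and P: "P \<in> carrier_mat n n"
    and Q: "Q \<in> carrier_mat n n" and QP: "Q * P = 1\<^sub>m n" and AP: "A = P * B * Q" by auto
  have "mtr A = mtr (P * (B * Q))" using AP assoc_mult_mat[OF P B Q] by simp
  also have "\<dots> = mtr ((B * Q) * P)" by (rule mtr_comm[OF P], insert B Q, auto)
  also have "(B * Q) * P = B" using assoc_mult_mat[OF B Q P] QP B by simp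
  finally show ?thesis .
qed

lemma order_prod_linear:
  "Polynomial.order x (prod_mset (image_mset (\<lambda>a. [:- a, 1:]) (M :: 'a::idom multiset))) = count M x"
proof (induction M)
  case empty
  then show ?case by (simp add: order_0I)
next
  case (add a M)
  have nz: "prod_mset (image_mset (\<lambda>a. [:- a, 1:]) M) \<noteq> 0"
    by (auto simp: prod_mset_zero_iff)
  have "Polynomial.order x ([:- a, 1:] * prod_mset (image_mset (\<lambda>a. [:- a, 1:]) M))
        = Polynomial.order x [:- a, 1:] + count M x"
    using nz add by (subst order_mult) (metis mult_eq_0_iff pCons_eq_0_iff one_neq_zero, simp)
  moreover have "Polynomial.order x [:- a, 1:] = (if x = a then 1 else 0)"
    using order_power_n_n[of a 1] by (auto intro!: order_0I)
  ultimately show ?case by auto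
qed

lemma linear_factor_unique:
  assumes "prod_mset (image_mset (\<lambda>a. [:- a, 1:]) M) = prod_mset (image_mset (\<lambda>a. [:- a, 1:]) (M' :: 'a::idom multiset))"
  shows "M = M'"
  by (rule multiset_eqI, metis assms order_prod_linear)

lemma real_spectrum_eq:
  assumes "char_poly A = prod_mset (image_mset (\<lambda>a. [:- a, 1:]) M)"
  shows "real_spectrum A = M"
  unfolding real_spectrum_def
  by (rule the_equality, rule assms, metis assms linear_factor_unique)

lemma real_eigen:
  fixes A :: "real mat"
  assumes A: "A \<in> carrier_mat n n" and sym: "\<And>i j. i < n \<Longrightarrow> j < n \<Longrightarrow> A $$ (i,j) = A $$ (j,i)"
    and ev: "eigenvalue (of_real_hom.mat_hom A) a"
  shows "Im a = 0"
proof -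
  let ?C = "of_real_hom.mat_hom A :: complex mat"
  from ev obtain v where v: "v \<in> carrier_vec n" "v \<noteq> 0\<^sub>v n" "?C *\<^sub>v v = a \<cdot>\<^sub>v v"
    unfolding eigenvalue_def eigenvector_def using A by auto
  have comp: "(\<Sum>j<n. complex_of_real (A $$ (i,j)) * v $ j) = a * v $ i" if i: "i < n" for i
  proof -
    have "(?C *\<^sub>v v) $ i = a * v $ i" using v i by simp
    moreover have "(?C *\<^sub>v v) $ i = (\<Sum>j<n. complex_of_real (A $$ (i,j)) * v $ j)"
      using i A v(1) by (auto simp: scalar_prod_def row_def atLeast0LessThan mult.commute)
    ultimately show ?thesis by simp
  qed
  define s where "s = (\<Sum>i<n. \<Sum>j<n. cnj (v $ i) * complex_of_real (A $$ (i,j)) * v $ j)"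
  have "s = (\<Sum>i<n. cnj (v$i) * (\<Sum>j<n. complex_of_real (A$$(i,j)) * v$j))"
    unfolding s_def by (simp add: sum_distrib_left mult.assoc)
  also have "\<dots> = (\<Sum>i<n. cnj (v$i) * (a * v$i))" using comp by simp
  also have "\<dots> = a * (\<Sum>i<n. cnj (v $ i) * v $ i)" by (simp add: sum_distrib_left mult.left_commute)
  finally have s1: "s = a * (\<Sum>i<n. cnj (v $ i) * v $ i)" .
  have "cnj s = (\<Sum>i<n. \<Sum>j<n. v $ i * complex_of_real (A $$ (i,j)) * cnj (v $ j))"
    unfolding s_def by simp
  also have "\<dots> = (\<Sum>j<n. \<Sum>i<n. v $ i * complex_of_real (A $$ (i,j)) * cnj (v $ j))"
    by (rule sum.swap)
  also have "\<dots> = s" unfolding s_def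
    by (rule sum.cong, simp, rule sum.cong, simp, simp add: sym mult.commute mult.left_commute)
  finally have "cnj s = s" .
  hence ims: "Im s = 0" by (metis complex_cnj_cancel_iff Reals_cnj_iff complex_is_Real_iff)
  define r where "r = (\<Sum>i<n. (cmod (v $ i))^2)"
  have rr: "(\<Sum>i<n. cnj (v $ i) * v $ i) = complex_of_real r"
    unfolding r_def of_real_sum by (intro sum.cong refl) (metis complex_norm_square mult.commute of_real_power)
  have "\<exists>i<n. v $ i \<noteq> 0" using v by (metis dim_vec carrier_vecD eq_vecI index_zero_vec)
  then obtain i where i: "i < n" "v $ i \<noteq> 0" by auto
  have "r > 0" unfolding r_def
    by (rule sum_pos2[of _ i], insert i, auto)
  from ims s1 rr have "Im a * r = 0" by simp
  with \<open>r > 0\<close> show ?thesis by simp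
qed

interpretation rp: map_poly_inj_idom_hom "complex_of_real" ..

lemma similar_sq:
  assumes "similar_mat_wit A B P Q" and A: "A \<in> carrier_mat n n"
  shows "similar_mat_wit (A * A) (B * B) P Q"
proof -
  from similar_mat_witD2[OF A assms(1)] have B: "B \<in> carrier_mat n n" and P: "P \<in> carrier_mat n n"
    and Q: "Q \<in> carrier_mat n n" and QP: "Q * P = 1\<^sub>m n" and PQ: "P * Q = 1\<^sub>m n" and AP: "A = P * B * Q" by auto
  have "A * A = P * B * (Q * P) * B * Q"
    unfolding AP using P B Q by (simp add: assoc_mult_mat[of _ n n _ n _ n])
  also have "\<dots> = P * (B * B) * Q" unfolding QP using P B Q by (simp add: assoc_mult_mat[of _ n n _ n _ n])
  finally have eq: "A * A = P * (B * B) * Q" .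
  show ?thesis unfolding similar_mat_wit_def Let_def using A B P Q PQ QP eq by auto
qed

lemma mtr_sq_ut:
  assumes B: "B \<in> carrier_mat n n" and ut: "upper_triangular B"
  shows "mtr (B * B) = (\<Sum>i<n. B $$ (i,i) * B $$ (i,i))"
proof -
  have "mtr (B * B) = (\<Sum>i<n. \<Sum>k<n. B $$ (i,k) * B $$ (k,i))"
    unfolding mtr_def using B by (auto simp: scalar_prod_def row_def col_def intro!: sum.cong)
  also have "\<dots> = (\<Sum>i<n. B $$ (i,i) * B $$ (i,i))"
  proof (rule sum.cong[OF refl])
    fix i assume i: "i \<in> {..<n}"
    have z: "B $$ (i,k) * B $$ (k,i) = 0" if "k \<in> {..<n} - {i}" for k
    proof (cases "k < i")
      case True then show ?thesis using ut B i unfolding upper_triangular_def by auto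
    next
      case False then have "i < k" using that by auto
      then show ?thesis using ut B that unfolding upper_triangular_def by auto
    qed
    show "(\<Sum>k<n. B $$ (i,k) * B $$ (k,i)) = B $$ (i,i) * B $$ (i,i)"
      using i z by (subst sum.remove[of _ i]) (auto intro!: sum.neutral)
  qed
  finally show ?thesis .
qed

lemma mtr_ut:
  assumes B: "B \<in> carrier_mat n n"
  shows "mtr B = sum_list (diag_mat B)"
  unfolding mtr_def diag_mat_def using B by (simp add: interv_sum_list_conv_sum_set_nat atLeast0LessThan)

lemma of_real_sum_list': "complex_of_real (sum_list xs) = sum_list (map complex_of_real xs)"
  by (induct xs) auto

lemma sym_spectrum:
  fixes A :: "real mat"
  assumes A: "A \<in> carrier_mat n n" and symA: "\<And>i j. i < n \<Longrightarrow> j < n \<Longrightarrow> A $$ (i,j) = A $$ (j,i)"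
  shows "size (real_spectrum A) = n" "sum_mset (real_spectrum A) = (\<Sum>i<n. A $$ (i,i))"
    "sum_mset (image_mset (\<lambda>x. x^2) (real_spectrum A)) = (\<Sum>i<n. \<Sum>j<n. (A $$ (i,j))^2)"
proof -
  let ?C = "of_real_hom.mat_hom A :: complex mat"
  have C: "?C \<in> carrier_mat n n" using A by simp
  obtain as where cp: "char_poly ?C = (\<Prod>a\<leftarrow>as. [:- a, 1:])" and len: "length as = n"
    using char_poly_factorized[OF C] by auto
  have re: "Im a = 0" if "a \<in> set as" for a
  proof -
    have "poly (char_poly ?C) a = 0" unfolding cp using that by (rule linear_poly_root)
    hence "eigenvalue ?C a" using eigenvalue_root_char_poly[OF C] by simp
    thus ?thesis using real_eigen[OF A symA, of a] by simp
  qed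
  define rs where "rs = map Re as"
  have as_eq: "as = map complex_of_real rs" unfolding rs_def
    unfolding map_map by (rule sym, rule map_idI) (simp add: complex_eq_iff re)
  have "map_poly complex_of_real (char_poly A) = (\<Prod>a\<leftarrow>as. [:- a, 1:])"
  proof -
    have "char_poly ?C = map_poly complex_of_real (char_poly A)" by (rule of_real_hom.char_poly_hom[OF A])
    thus ?thesis using cp by simp
  qed
  also have "\<dots> = map_poly complex_of_real (\<Prod>r\<leftarrow>rs. [:- r, 1:])"
    unfolding as_eq rp.hom_prod_list by (simp add: o_def)
  finally have cpA: "char_poly A = (\<Prod>r\<leftarrow>rs. [:- r, 1:])" by (rule rp.injectivity)
  have spec: "real_spectrum A = mset rs"
    by (rule real_spectrum_eq, unfold cpA, metis mset_map prod_mset_prod_list)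
  show "size (real_spectrum A) = n" unfolding spec rs_def using len by simp
  obtain B P Q where sd: "schur_decomposition ?C as = (B,P,Q)" by (metis prod_cases3)
  from schur_decomposition[OF C cp sd] have wit: "similar_mat_wit ?C B P Q" and ut: "upper_triangular B"
    and dg: "diag_mat B = as" by blast+
  from similar_mat_witD2[OF C wit] have B: "B \<in> carrier_mat n n" by auto
  have "complex_of_real (sum_list rs) = sum_list as" unfolding as_eq of_real_sum_list' by (rule refl)
  also have "\<dots> = mtr B" by (simp only: mtr_ut[OF B] dg)
  also have "\<dots> = mtr ?C" by (rule mtr_similar[OF wit C, symmetric])
  also have "\<dots> = complex_of_real (\<Sum>i<n. A $$ (i,i))" unfolding mtr_def using A by (auto simp: of_real_sum intro!: sum.cong)
  finally have "complex_of_real (sum_list rs) = complex_of_real (\<Sum>i<n. A $$ (i,i))" .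
  hence "sum_list rs = (\<Sum>i<n. A $$ (i,i))" by (simp only: of_real_eq_iff)
  thus "sum_mset (real_spectrum A) = (\<Sum>i<n. A $$ (i,i))" unfolding spec sum_mset_sum_list .
  have "complex_of_real (sum_list (map (\<lambda>x. x^2) rs)) = (\<Sum>i<n. B $$ (i,i) * B $$ (i,i))"
  proof -
    have lr: "length rs = n" using len unfolding rs_def by simp
    have Bi: "B $$ (i,i) = complex_of_real (rs ! i)" if "i < n" for i
    proof -
      have "diag_mat B ! i = B $$ (i,i)" using B that unfolding diag_mat_def by simp
      thus ?thesis using dg as_eq that lr by simp
    qed
    have "complex_of_real (sum_list (map (\<lambda>x. x^2) rs)) = (\<Sum>i<n. complex_of_real ((rs ! i)^2))"
      unfolding of_real_sum_list' map_map sum_list_sum_nth by (simp add: atLeast0LessThan lr)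
    also have "\<dots> = (\<Sum>i<n. B $$ (i,i) * B $$ (i,i))" using Bi by (simp add: power2_eq_square)
    finally show ?thesis .
  qed
  also have "\<dots> = mtr (B * B)" by (rule mtr_sq_ut[OF B ut, symmetric])
  also have "\<dots> = mtr (?C * ?C)" by (rule mtr_similar[OF similar_sq[OF wit C], of n, symmetric]) (use C in simp)
  also have "\<dots> = complex_of_real (\<Sum>i<n. \<Sum>j<n. (A $$ (i,j))^2)"
    unfolding mtr_def using A symA by (auto simp: scalar_prod_def row_def col_def power2_eq_square of_real_sum intro!: sum.cong)
  finally have "complex_of_real (sum_list (map (\<lambda>x. x^2) rs)) = complex_of_real (\<Sum>i<n. \<Sum>j<n. (A $$ (i,j))^2)" .
  hence "sum_list (map (\<lambda>x. x^2) rs) = (\<Sum>i<n. \<Sum>j<n. (A $$ (i,j))^2)" by (simp only: of_real_eq_iff)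
  thus "sum_mset (image_mset (\<lambda>x. x^2) (real_spectrum A)) = (\<Sum>i<n. \<Sum>j<n. (A $$ (i,j))^2)"
    unfolding spec mset_map[symmetric] sum_mset_sum_list .
qed

definition adj :: "(nat \<Rightarrow> nat \<Rightarrow> bool) \<Rightarrow> nat \<Rightarrow> nat \<Rightarrow> real" where
  "adj E i j = (if E i j then 1 else 0)"
definition nadj :: "(nat \<Rightarrow> nat \<Rightarrow> bool) \<Rightarrow> nat \<Rightarrow> nat \<Rightarrow> real" where
  "nadj E i j = (if i \<noteq> j \<and> \<not> E i j then 1 else 0)"

lemma degree_sum: "real (degree n E i) = (\<Sum>j<n. adj E i j)"
proof -
  have "{j. j < n \<and> E i j} = {j \<in> {..<n}. E i j}" by auto
  hence "real (degree n E i) = (\<Sum>j\<in>{j \<in> {..<n}. E i j}. 1)" unfolding degree_def by simp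
  also have "\<dots> = (\<Sum>j<n. adj E i j)" by (subst sum.inter_filter) (auto simp: adj_def)
  finally show ?thesis .
qed

lemma num_edges_sum: "real (num_edges n E) = (\<Sum>i<n. \<Sum>j<n. if i < j then adj E i j else 0)"
proof -
  have "{(i, j). i < j \<and> j < n \<and> E i j} = {p \<in> {..<n} \<times> {..<n}. fst p < snd p \<and> E (fst p) (snd p)}"
    by auto
  hence "real (num_edges n E) = (\<Sum>p\<in>{p \<in> {..<n} \<times> {..<n}. fst p < snd p \<and> E (fst p) (snd p)}. 1)"
    unfolding num_edges_def by simp
  also have "\<dots> = (\<Sum>p\<in>{..<n} \<times> {..<n}. if fst p < snd p \<and> E (fst p) (snd p) then 1 else 0)"
    by (subst sum.inter_filter) auto
  also have "\<dots> = (\<Sum>i<n. \<Sum>j<n. if i < j then adj E i j else 0)"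
    unfolding sum.cartesian_product by (rule sum.cong) (auto simp: adj_def)
  finally show ?thesis .
qed

lemma handshake:
  assumes sg: "simple_graph n E"
  shows "(\<Sum>i<n. real (degree n E i)) = 2 * real (num_edges n E)"
proof -
  have sym: "adj E i j = adj E j i" if "i < n" "j < n" for i j
    using sg that unfolding simple_graph_def adj_def by auto
  have irr: "adj E i i = 0" if "i < n" for i using sg that unfolding simple_graph_def adj_def by auto
  have split: "adj E i j = (if i < j then adj E i j else 0) + (if j < i then adj E i j else 0)"
    if "i < n" "j < n" for i j
    using irr[OF that(1)] by (cases i j rule: linorder_cases) auto
  have "(\<Sum>i<n. real (degree n E i)) = (\<Sum>i<n. \<Sum>j<n. adj E i j)" by (simp add: degree_sum)
  also have "\<dots> = (\<Sum>i<n. \<Sum>j<n. if i < j then adj E i j else 0) + (\<Sum>i<n. \<Sum>j<n. if j < i then adj E i j else 0)"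
    by (subst sum.distrib[symmetric], rule sum.cong, simp, subst sum.distrib[symmetric], rule sum.cong, simp)
       (rule split, auto)
  also have "(\<Sum>i<n. \<Sum>j<n. if j < i then adj E i j else 0) = (\<Sum>j<n. \<Sum>i<n. if j < i then adj E i j else 0)"
    by (rule sum.swap)
  also have "\<dots> = (\<Sum>i<n. \<Sum>j<n. if i < j then adj E i j else 0)"
    by (rule sum.cong, simp, rule sum.cong, simp, simp add: sym)
  finally show ?thesis by (simp add: num_edges_sum)
qed

lemma pointwise_dc:
  assumes sg: "simple_graph n E" and lt: "u < n" "v < n" "w < n" "x < n"
  shows "adj E u v * nadj E w x \<le>
     (if v \<notin> {u,w,x} \<and> distinct [u,w,x] then adj E w u * nadj E w x else 0)
   + (if x \<notin> {u,v,w} \<and> distinct [u,v,w] then adj E u v * nadj E u w else 0)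
   + (if w = u then adj E u v * nadj E w x else 0)
   + (if w = v then adj E u v * nadj E w x else 0)
   + (if x = u then adj E u v * nadj E w x else 0)
   + (if x = v then adj E u v * nadj E w x else 0)"
proof -
  have sym: "E i j \<longleftrightarrow> E j i" if "i < n" "j < n" for i j using sg that unfolding simple_graph_def by auto
  have irr: "\<not> E i i" if "i < n" for i using sg that unfolding simple_graph_def by auto
  show ?thesis
  proof (cases "E u v \<and> w \<noteq> x \<and> \<not> E w x")
    case False
    then have "adj E u v * nadj E w x = 0" unfolding adj_def nadj_def by auto
    moreover have nn: "0 \<le> (if P then adj E a b * nadj E c d else 0)" for P a b c d
      unfolding adj_def nadj_def by auto
    ultimately show ?thesis using nn[of "v \<notin> {u,w,x} \<and> distinct [u,w,x]" w u w x]
      nn[of "x \<notin> {u,v,w} \<and> distinct [u,v,w]" u v u w] nn[of "w = u" u v w x] nn[of "w = v" u v w x]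
      nn[of "x = u" u v w x] nn[of "x = v" u v w x] by linarith
  next
    case True
    have uv: "u \<noteq> v" using True irr lt by auto
    have l1: "adj E u v * nadj E w x = 1" using True unfolding adj_def nadj_def by auto
    have nn: "adj E i j \<ge> 0" "nadj E i j \<ge> 0" for i j unfolding adj_def nadj_def by auto
    show ?thesis
    proof (cases "w = u \<or> w = v \<or> x = u \<or> x = v")
      case True
      then show ?thesis using l1 nn by (auto simp: zero_le_mult_iff add_nonneg_nonneg)
    next
      case False
      then have d: "v \<notin> {u,w,x} \<and> distinct [u,w,x]" "x \<notin> {u,v,w} \<and> distinct [u,v,w]"
        using uv \<open>E u v \<and> w \<noteq> x \<and> \<not> E w x\<close> by auto
      have "adj E w u * nadj E w x + adj E u v * nadj E u w = 1"
        using True False sym[of u w] lt unfolding adj_def nadj_def by auto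
      then show ?thesis using d l1 False by simp
    qed
  qed
qed

lemma count3:
  assumes "a < n" "b < n" "c < n" "distinct [a,b,c]"
  shows "(\<Sum>y<n. if y \<notin> {a,b,c} \<and> distinct [a,b,c] then k else 0) = (real n - 3) * (k::real)"
proof -
  have "(\<Sum>y<n. if y \<notin> {a,b,c} \<and> distinct [a,b,c] then k else 0) = (\<Sum>y\<in>{y \<in> {..<n}. y \<notin> {a,b,c}}. k)"
    using assms(4) by (subst sum.inter_filter) auto
  also have "{y \<in> {..<n}. y \<notin> {a,b,c}} = {..<n} - {a,b,c}" by auto
  also have "card ({..<n} - {a,b,c}) = n - 3"
    using assms by (subst card_Diff_subset) auto
  moreover have "n \<ge> 3" using assms by (auto simp: distinct_card) 
  ultimately show ?thesis by (simp add: of_nat_diff)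
qed

lemma delta2:
  assumes "u < (n::nat)"
  shows "(\<Sum>w<n. \<Sum>x<n. if w = u then g w x else 0) = (\<Sum>x<n. (g u x :: real))"
proof -
  have "(\<Sum>w<n. \<Sum>x<n. if w = u then g w x else 0) = (\<Sum>w<n. if w = u then (\<Sum>x<n. g w x) else 0)"
    by (rule sum.cong) auto
  also have "\<dots> = (\<Sum>x<n. g u x)" using assms by (simp add: sum.delta)
  finally show ?thesis .
qed

lemma delta1:
  assumes "u < (n::nat)"
  shows "(\<Sum>x<n. if x = u then g x else 0) = (g u :: real)"
  using assms by (simp add: sum.delta)

lemma de_caen_core:
  assumes sg: "simple_graph n E"
  defines "d \<equiv> \<lambda>i. \<Sum>j<n. adj E i j" and "bd \<equiv> \<lambda>i. \<Sum>j<n. nadj E i j"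
  shows "(\<Sum>i<n. d i) * (\<Sum>i<n. bd i) \<le> 2 * (real n - 1) * (\<Sum>i<n. d i * bd i)"
proof -
  have symA: "adj E i j = adj E j i" if "i < n" "j < n" for i j
    using sg that unfolding simple_graph_def adj_def by auto
  have symB: "nadj E i j = nadj E j i" if "i < n" "j < n" for i j
    using sg that unfolding simple_graph_def nadj_def by auto
  define L where "L = (\<Sum>i<n. d i * bd i)"
  define F1 where "F1 = (\<lambda>u v w x. if v \<notin> {u,w,x} \<and> distinct [u,w,x] then adj E w u * nadj E w x else 0)"
  define F2 where "F2 = (\<lambda>u v w x. if x \<notin> {u,v,w} \<and> distinct [u,v,w] then adj E u v * nadj E u w else 0)"
  define G where "G = (\<lambda>u v w x. adj E u v * nadj E w x)"
  have P: "(\<Sum>u<n. \<Sum>v<n. \<Sum>w<n. \<Sum>x<n. G u v w x) = (\<Sum>i<n. d i) * (\<Sum>i<n. bd i)"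
  proof -
    have "(\<Sum>u<n. \<Sum>v<n. \<Sum>w<n. \<Sum>x<n. G u v w x) = (\<Sum>u<n. \<Sum>v<n. adj E u v * (\<Sum>w<n. \<Sum>x<n. nadj E w x))"
      unfolding G_def by (simp add: sum_distrib_left)
    also have "\<dots> = (\<Sum>u<n. \<Sum>v<n. adj E u v) * (\<Sum>w<n. \<Sum>x<n. nadj E w x)"
      by (simp add: sum_distrib_right)
    finally show ?thesis unfolding d_def bd_def .
  qed
  have T1: "(\<Sum>u<n. \<Sum>v<n. \<Sum>w<n. \<Sum>x<n. F1 u v w x) = (real n - 3) * L"
  proof -
    have "(\<Sum>u<n. \<Sum>v<n. \<Sum>w<n. \<Sum>x<n. F1 u v w x) = (\<Sum>u<n. \<Sum>w<n. \<Sum>x<n. \<Sum>v<n. F1 u v w x)"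
      by (rule sum.cong[OF refl], subst sum.swap, rule sum.cong[OF refl], rule sum.swap)
    also have "\<dots> = (\<Sum>u<n. \<Sum>w<n. \<Sum>x<n. (real n - 3) * (adj E w u * nadj E w x))"
    proof (intro sum.cong refl)
      fix u w x assume "u \<in> {..<n}" "w \<in> {..<n}" "x \<in> {..<n}"
      show "(\<Sum>v<n. F1 u v w x) = (real n - 3) * (adj E w u * nadj E w x)"
      proof (cases "distinct [u,w,x]")
        case True then show ?thesis unfolding F1_def using count3 \<open>u \<in> _\<close> \<open>w \<in> _\<close> \<open>x \<in> _\<close> by auto
      next
        case False then have "adj E w u * nadj E w x = 0" unfolding adj_def nadj_def
          using sg \<open>w \<in> _\<close> unfolding simple_graph_def by auto
        moreover have "F1 u v w x = 0" for v using False unfolding F1_def by auto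
        ultimately show ?thesis by simp
      qed
    qed
    also have "\<dots> = (real n - 3) * (\<Sum>w<n. \<Sum>u<n. \<Sum>x<n. adj E w u * nadj E w x)"
      unfolding sum_distrib_left by (rule sum.swap)
    also have "\<dots> = (real n - 3) * L"
      unfolding L_def d_def bd_def sum_product by (simp add: sum_distrib_left mult.assoc)
    finally show ?thesis .
  qed
  have T2: "(\<Sum>u<n. \<Sum>v<n. \<Sum>w<n. \<Sum>x<n. F2 u v w x) = (real n - 3) * L"
  proof -
    have "(\<Sum>u<n. \<Sum>v<n. \<Sum>w<n. \<Sum>x<n. F2 u v w x) = (\<Sum>u<n. \<Sum>v<n. \<Sum>w<n. (real n - 3) * (adj E u v * nadj E u w))"
    proof (intro sum.cong refl)
      fix u v w assume "u \<in> {..<n}" "v \<in> {..<n}" "w \<in> {..<n}"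
      show "(\<Sum>x<n. F2 u v w x) = (real n - 3) * (adj E u v * nadj E u w)"
      proof (cases "distinct [u,v,w]")
        case True then show ?thesis unfolding F2_def using count3 \<open>u \<in> _\<close> \<open>v \<in> _\<close> \<open>w \<in> _\<close> by auto
      next
        case False then have "adj E u v * nadj E u w = 0" unfolding adj_def nadj_def
          using sg \<open>u \<in> _\<close> unfolding simple_graph_def by auto
        moreover have "F2 u v w x = 0" for x using False unfolding F2_def by auto
        ultimately show ?thesis by simp
      qed
    qed
    also have "\<dots> = (real n - 3) * L"
      unfolding L_def d_def bd_def sum_product by (simp add: sum_distrib_left mult.assoc)
    finally show ?thesis .
  qed
  have T3: "(\<Sum>u<n. \<Sum>v<n. \<Sum>w<n. \<Sum>x<n. if w = u then G u v w x else 0) = L"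
  proof -
    have "(\<Sum>u<n. \<Sum>v<n. \<Sum>w<n. \<Sum>x<n. if w = u then G u v w x else 0) = (\<Sum>u<n. \<Sum>v<n. \<Sum>x<n. G u v u x)"
      by (rule sum.cong[OF refl], rule sum.cong[OF refl], rule delta2, simp)
    also have "\<dots> = L" unfolding L_def G_def d_def bd_def sum_product by (simp add: sum_distrib_left mult.assoc)
    finally show ?thesis .
  qed
  have T4: "(\<Sum>u<n. \<Sum>v<n. \<Sum>w<n. \<Sum>x<n. if w = v then G u v w x else 0) = L"
  proof -
    have "(\<Sum>u<n. \<Sum>v<n. \<Sum>w<n. \<Sum>x<n. if w = v then G u v w x else 0) = (\<Sum>u<n. \<Sum>v<n. adj E v u * bd v)"
      by (intro sum.cong refl) (subst delta2, simp, simp add: G_def bd_def sum_distrib_left symA)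
    also have "\<dots> = L" unfolding L_def d_def
      by (subst sum.swap) (simp add: sum_distrib_left sum_distrib_right mult.assoc)
    finally show ?thesis .
  qed
  have T5: "(\<Sum>u<n. \<Sum>v<n. \<Sum>w<n. \<Sum>x<n. if x = u then G u v w x else 0) = L"
  proof -
    have "(\<Sum>u<n. \<Sum>v<n. \<Sum>w<n. \<Sum>x<n. if x = u then G u v w x else 0) = (\<Sum>u<n. \<Sum>v<n. \<Sum>w<n. adj E u v * nadj E u w)"
      by (intro sum.cong refl) (subst delta1, simp, simp add: G_def symB)
    also have "\<dots> = L" unfolding L_def d_def bd_def sum_product by (simp add: sum_distrib_left mult.assoc)
    finally show ?thesis .
  qed
  have T6: "(\<Sum>u<n. \<Sum>v<n. \<Sum>w<n. \<Sum>x<n. if x = v then G u v w x else 0) = L"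
  proof -
    have "(\<Sum>u<n. \<Sum>v<n. \<Sum>w<n. \<Sum>x<n. if x = v then G u v w x else 0) = (\<Sum>u<n. \<Sum>v<n. \<Sum>w<n. adj E v u * nadj E v w)"
      by (intro sum.cong refl) (subst delta1, simp, simp add: G_def symB symA)
    also have "\<dots> = (\<Sum>v<n. \<Sum>u<n. \<Sum>w<n. adj E v u * nadj E v w)" by (rule sum.swap)
    also have "\<dots> = L" unfolding L_def d_def bd_def sum_product by (simp add: sum_distrib_left mult.assoc)
    finally show ?thesis .
  qed
  have "(\<Sum>u<n. \<Sum>v<n. \<Sum>w<n. \<Sum>x<n. G u v w x) \<le>
     (\<Sum>u<n. \<Sum>v<n. \<Sum>w<n. \<Sum>x<n. F1 u v w x + F2 u v w x
        + (if w = u then G u v w x else 0) + (if w = v then G u v w x else 0)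
        + (if x = u then G u v w x else 0) + (if x = v then G u v w x else 0))"
    unfolding G_def F1_def F2_def by (intro sum_mono) (rule pointwise_dc[OF sg], auto)
  also have "\<dots> = (real n - 3) * L + (real n - 3) * L + L + L + L + L"
    by (simp only: sum.distrib T1 T2 T3 T4 T5 T6)
  finally show ?thesis using P unfolding L_def by (simp add: algebra_simps)
qed

lemma alg1:
  fixes q y M :: real
  assumes q: "q > 0" and h: "(y + y / q)^2 \<le> M + (q + 1) * (y / q)^2"
  shows "(q + 1) * y^2 \<le> q * M"
proof -
  have e1: "q^2 * (y + y / q)^2 = ((q + 1) * y)^2" using q by (simp add: power2_eq_square field_simps)
  have e2: "q^2 * ((q + 1) * (y / q)^2) = (q + 1) * y^2" using q by (simp add: power2_eq_square field_simps)
  have "q^2 * (y + y / q)^2 \<le> q^2 * (M + (q + 1) * (y / q)^2)" using h by (intro mult_left_mono) auto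
  hence "q^2 * (y + y / q)^2 \<le> q^2 * M + q^2 * ((q + 1) * (y / q)^2)" by (simp only: distrib_left)
  hence "((q + 1) * y)^2 \<le> q^2 * M + (q + 1) * y^2" unfolding e1 e2 .
  hence "q * ((q + 1) * y^2) \<le> q * (q * M)" by (simp add: power2_eq_square algebra_simps)
  thus ?thesis using q by simp
qed

lemma cs_single:
  fixes mu :: "nat \<Rightarrow> real"
  assumes n: "n \<ge> 2" and s0: "(\<Sum>i<n. mu i) = 0" and k: "k < n"
  shows "real n * (mu k)^2 \<le> (real n - 1) * (\<Sum>i<n. (mu i)^2)"
proof -
  define q where "q = real n - 1"
  define c where "c = mu k / q"
  have q: "q > 0" using n unfolding q_def by simp
  have "(mu k + c)^2 \<le> (\<Sum>i<n. (mu i + c)^2)"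
    using k by (intro member_le_sum) auto
  also have "(\<Sum>i<n. (mu i + c)^2) = (\<Sum>i<n. (mu i)^2 + 2 * c * mu i + c^2)"
    by (rule sum.cong) (auto simp: power2_eq_square algebra_simps)
  also have "\<dots> = (\<Sum>i<n. (mu i)^2) + 2 * c * (\<Sum>i<n. mu i) + real n * c^2"
    by (simp add: sum.distrib sum_distrib_left)
  finally have "(mu k + mu k / q)^2 \<le> (\<Sum>i<n. (mu i)^2) + (q + 1) * (mu k / q)^2"
    using s0 unfolding c_def q_def by simp
  from alg1[OF q this] show ?thesis unfolding q_def by simp
qed

lemma core_ineq:
  fixes e :: "nat \<Rightarrow> real" and n :: nat and m S K a M c t QE R :: real
  assumes a_def: "a = 2 * m / real n"
    and M_def: "M = S + 2 * m - 4 * m^2 / real n"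
    and c_def: "c = m * ((real n)^3 - (real n)^2 - 2 * m * real n + 4 * m)"
    and t_def: "t = sqrt c / (2 * real n)"
    and QE_def: "QE = (\<Sum>i<n. \<bar>e i - a\<bar>)"
    and R_def: "R = 2 * sqrt 2 / 3 * sqrt (K * real n)"
  and n2: "n \<ge> 2" and s1: "(\<Sum>i<n. e i) = 2 * m" and s2: "(\<Sum>i<n. (e i)^2) = S + 2 * m"
    and dc: "S \<le> m * (real n - 2) + 2 * m^2 / (real n - 1)"
    and KM: "K \<le> M" and K0: "0 \<le> K" and m1: "m \<ge> 1" and mle: "2 * m \<le> real n * (real n - 1)"
    and hyp: "\<And>i. i < n \<Longrightarrow> t \<le> \<bar>e i - a\<bar>"
  shows "\<forall>i<n. \<bar>e i - a\<bar> \<le> 2 * t" "R \<le> QE" "QE = R \<Longrightarrow> M = K \<and> n \<le> 3 \<and> M = c / (2 * real n)"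
proof -
  define N where "N = real n"
  have N2: "N \<ge> 2" using n2 unfolding N_def by simp
  define mu where "mu i = e i - a" for i
  have a_eq: "N * a = 2 * m" unfolding a_def N_def using N2 N_def by simp
  have smu: "(\<Sum>i<n. mu i) = 0"
    unfolding mu_def sum_subtractf s1 using a_eq N_def by simp
  have "(\<Sum>i<n. (mu i)^2) = (\<Sum>i<n. (e i)^2 - 2 * a * e i + a^2)"
    unfolding mu_def by (rule sum.cong) (auto simp: power2_eq_square algebra_simps)
  also have "\<dots> = (S + 2 * m) - 2 * a * (2 * m) + N * a^2"
    unfolding N_def by (simp add: sum.distrib sum_subtractf sum_distrib_left[symmetric] s1 s2)
  also have "\<dots> = M" unfolding M_def a_def N_def using N2 N_def by (simp add: power2_eq_square field_simps)
  finally have smu2: "(\<Sum>i<n. (mu i)^2) = M" .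
  have cform: "c = m * (N^2 * (N - 1) - 2 * m * (N - 2))" unfolding c_def N_def by (simp add: power2_eq_square power3_eq_cube algebra_simps)
  have "2 * m * (N - 2) \<le> N * (N - 1) * (N - 2)" using mle N2 unfolding N_def by (intro mult_right_mono) auto
  hence cpos_aux: "N^2 * (N - 1) - 2 * m * (N - 2) \<ge> 2 * N * (N - 1)" by (simp add: power2_eq_square algebra_simps)
  have "2 * N * (N - 1) > 0" using N2 by simp
  hence cpos: "c > 0" unfolding cform using m1 cpos_aux by (intro mult_pos_pos) auto
  have tpos: "t > 0" unfolding t_def N_def[symmetric] using cpos N2 by simp
  have t2: "t^2 = c / (4 * N^2)" unfolding t_def N_def[symmetric] using cpos
    by (simp add: power_divide power_mult_distrib)
  have Mb: "M * (N * (N - 1)) \<le> c"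
  proof -
    have "S * (N * (N - 1)) \<le> (m * (N - 2) + 2 * m^2 / (N - 1)) * (N * (N - 1))"
      using dc N2 unfolding N_def by (intro mult_right_mono) auto
    also have "\<dots> = m * (N - 2) * N * (N - 1) + 2 * m^2 * N" using N2 by (simp add: field_simps)
    finally have h: "S * (N * (N - 1)) \<le> m * (N - 2) * N * (N - 1) + 2 * m^2 * N" .
    have "M * (N * (N - 1)) = S * (N * (N - 1)) + 2 * m * N * (N - 1) - 4 * m^2 * (N - 1)"
      unfolding M_def N_def[symmetric] using N2 by (simp add: field_simps)
    also have "\<dots> \<le> m * (N - 2) * N * (N - 1) + 2 * m^2 * N + 2 * m * N * (N - 1) - 4 * m^2 * (N - 1)"
      using h by simp
    also have "\<dots> = c" unfolding cform by (simp add: power2_eq_square algebra_simps)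
    finally show ?thesis .
  qed
  have bound: "\<bar>mu k\<bar> \<le> 2 * t" if k: "k < n" for k
  proof -
    have "N * (mu k)^2 \<le> (N - 1) * M" using cs_single[OF n2 smu k] smu2 unfolding N_def by simp
    hence "N * (mu k)^2 * N \<le> (N - 1) * M * N" using N2 by (intro mult_right_mono) auto
    also have "(N - 1) * M * N = M * (N * (N - 1))" by simp
    finally have "(mu k)^2 * N^2 \<le> c" using Mb by (simp add: power2_eq_square algebra_simps)
    hence "(mu k)^2 \<le> c / N^2" using N2 by (simp add: field_simps)
    also have "c / N^2 = (2 * t)^2" using t2 N2 by (simp add: power2_eq_square field_simps)
    finally have "\<bar>mu k\<bar>^2 \<le> (2 * t)^2" by simp
    from power2_le_imp_le[OF this] show ?thesis using tpos by simp
  qed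
  show "\<forall>i<n. \<bar>e i - a\<bar> \<le> 2 * t" using bound unfolding mu_def by auto
  have pw: "(mu k)^2 \<le> 3 * t * \<bar>mu k\<bar> - 2 * t^2" if k: "k < n" for k
  proof -
    have l: "t \<le> \<bar>mu k\<bar>" using hyp[OF k] unfolding mu_def .
    have "0 \<le> (\<bar>mu k\<bar> - t) * (2 * t - \<bar>mu k\<bar>)" using l bound[OF k] by (intro mult_nonneg_nonneg) auto
    thus ?thesis by (simp add: power2_eq_square algebra_simps abs_mult_self_eq)
  qed
  have QEmu: "QE = (\<Sum>i<n. \<bar>mu i\<bar>)" unfolding QE_def mu_def ..
  have "M \<le> (\<Sum>i<n. 3 * t * \<bar>mu i\<bar> - 2 * t^2)" unfolding smu2[symmetric] by (intro sum_mono pw) auto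
  also have "\<dots> = 3 * t * QE - 2 * N * t^2" unfolding QEmu N_def by (simp add: sum_subtractf sum_distrib_left)
  finally have MQ: "M + 2 * N * t^2 \<le> 3 * t * QE" by simp
  have M0: "M \<ge> 0" unfolding smu2[symmetric] by (intro sum_nonneg) auto
  have "0 \<le> M + 2 * N * t^2" using M0 N2 by simp
  hence sq1: "(M + 2 * N * t^2)^2 \<le> (3 * t * QE)^2" using MQ by (intro power_mono) auto
  have sq2: "(M + 2 * N * t^2)^2 = t^2 * (8 * N * M) + (M - 2 * N * t^2)^2" by (simp add: power2_eq_square algebra_simps)
  have sq3: "(3 * t * QE)^2 = t^2 * (9 * QE^2)" by (simp add: power2_eq_square algebra_simps)
  have "t^2 * (8 * N * M) \<le> t^2 * (9 * QE^2)"
    using sq1 sq2 sq3 zero_le_power2[of "M - 2 * N * t^2"] by linarith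
  hence QM: "8 * N * M \<le> 9 * QE^2" using tpos by simp
  have QE0: "QE \<ge> 0" unfolding QE_def by (intro sum_nonneg) auto
  have R0: "R \<ge> 0" unfolding R_def using K0 by simp
  have R2: "R^2 = 8 / 9 * K * N" unfolding R_def N_def using K0 by (simp add: power_mult_distrib power_divide)
  have "8 * N * K \<le> 8 * N * M" using KM N2 by (intro mult_left_mono) auto
  moreover have "R^2 = 8 * N * K / 9" unfolding R2 by simp
  ultimately have "R^2 \<le> QE^2" using QM by linarith
  from power2_le_imp_le[OF this QE0] show "R \<le> QE" .
  assume eq: "QE = R"
  have R2': "9 * R^2 = 8 * N * K" unfolding R2 by simp
  have "8 * N * M \<le> 8 * N * K" using QM R2' unfolding eq by linarith
  hence MK: "M = K" using KM N2 by simp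
  have "(M - 2 * N * t^2)^2 \<le> 0"
  proof -
    have "(M + 2 * N * t^2)^2 \<le> t^2 * (9 * QE^2)" using sq1 sq3 by simp
    also have "9 * QE^2 = 8 * K * N" using eq R2 by simp
    finally have "(M + 2 * N * t^2)^2 \<le> t^2 * (8 * N * M)" using MK by (simp add: algebra_simps)
    thus ?thesis using sq2 by linarith
  qed
  hence Mt: "M = 2 * N * t^2" by simp
  hence Mc: "M = c / (2 * N)" using t2 N2 by (simp add: power2_eq_square field_simps)
  have "c / (2 * N) * (N * (N - 1)) \<le> c" using Mb Mc by simp
  hence "c * (N - 1) \<le> c * 2" using N2 by (simp add: field_simps)
  hence "N - 1 \<le> 2" using cpos by simp
  hence "n \<le> 3" unfolding N_def by simp
  thus "M = K \<and> n \<le> 3 \<and> M = c / (2 * real n)" using MK Mc unfolding N_def by simp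
qed

lemma three_case:
  fixes x y z D dm :: real
  assumes xyz: "x \<in> {0,1}" "y \<in> {0,1}" "z \<in> {0,1}"
    and Dge: "x + y \<le> D" "x + z \<le> D" "y + z \<le> D" and Din: "D = x + y \<or> D = x + z \<or> D = y + z"
    and dle: "dm \<le> x + y" "dm \<le> x + z" "dm \<le> y + z" and din: "dm = x + y \<or> dm = x + z \<or> dm = y + z"
    and m1: "1 \<le> x + y + z"
    and eq: "(x + y)^2 + (x + z)^2 + (y + z)^2 + 2 * (x + y + z) - 4 * (x + y + z)^2 / 3
             = 2 * (x + y + z) + (D - dm)^2 / 2"
  shows "x = 1 \<and> y = 1 \<and> z = 1"
  using assms by (auto simp: power2_eq_square)

lemma k3_sum:
  fixes a b c :: real
  assumes "a + b + c = 0" "1 \<le> \<bar>a\<bar>" "\<bar>a\<bar> \<le> 2" "1 \<le> \<bar>b\<bar>" "\<bar>b\<bar> \<le> 2" "1 \<le> \<bar>c\<bar>" "\<bar>c\<bar> \<le> 2"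
  shows "\<bar>a\<bar> + \<bar>b\<bar> + \<bar>c\<bar> \<le> 4"
  using assms by arith

lemma deg_le:
  assumes sg: "simple_graph n E" and i: "i < n"
  shows "real (degree n E i) \<le> real n - 1"
proof -
  have "{j. j < n \<and> E i j} \<subseteq> {..<n} - {i}" using sg i unfolding simple_graph_def by auto
  hence "degree n E i \<le> card ({..<n} - {i})" unfolding degree_def by (intro card_mono) auto
  also have "\<dots> = n - 1" using i by simp
  finally show ?thesis using i by linarith
qed

lemma nadj_sum:
  assumes sg: "simple_graph n E" and i: "i < n"
  shows "(\<Sum>j<n. nadj E i j) = (real n - 1) - real (degree n E i)"
proof -
  have "nadj E i j = 1 - (if j = i then 1 else 0) - adj E i j" for j
    using sg i unfolding simple_graph_def nadj_def adj_def by auto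
  hence "(\<Sum>j<n. nadj E i j) = (\<Sum>j<n. 1 - (if j = i then 1 else 0) - adj E i j)" by simp
  also have "\<dots> = real n - 1 - (\<Sum>j<n. adj E i j)" using i by (simp add: sum_subtractf sum.delta)
  finally show ?thesis by (simp add: degree_sum)
qed

lemma de_caen:
  assumes sg: "simple_graph n E" and n2: "n \<ge> 2"
  shows "(\<Sum>i<n. (real (degree n E i))^2) \<le> real (num_edges n E) * (real n - 2)
           + 2 * (real (num_edges n E))^2 / (real n - 1)"
proof -
  define N where "N = real n"
  define m where "m = real (num_edges n E)"
  define S where "S = (\<Sum>i<n. (real (degree n E i))^2)"
  have N2: "N \<ge> 2" using n2 unfolding N_def by simp
  have hs: "(\<Sum>i<n. real (degree n E i)) = 2 * m" using handshake[OF sg] unfolding m_def .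
  have core: "(\<Sum>i<n. (\<Sum>j<n. adj E i j)) * (\<Sum>i<n. (\<Sum>j<n. nadj E i j)) \<le>
      2 * (real n - 1) * (\<Sum>i<n. (\<Sum>j<n. adj E i j) * (\<Sum>j<n. nadj E i j))"
    using de_caen_core[OF sg] by simp
  have s1: "(\<Sum>i<n. (\<Sum>j<n. adj E i j)) = 2 * m" using hs by (simp add: degree_sum)
  have s2: "(\<Sum>i<n. (\<Sum>j<n. nadj E i j)) = N * (N - 1) - 2 * m"
  proof -
    have "(\<Sum>i<n. (\<Sum>j<n. nadj E i j)) = (\<Sum>i<n. (N - 1) - real (degree n E i))"
      unfolding N_def by (rule sum.cong) (auto simp: nadj_sum[OF sg])
    also have "\<dots> = N * (N - 1) - 2 * m" using hs unfolding N_def by (simp add: sum_subtractf)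
    finally show ?thesis .
  qed
  have s3: "(\<Sum>i<n. (\<Sum>j<n. adj E i j) * (\<Sum>j<n. nadj E i j)) = (N - 1) * (2 * m) - S"
  proof -
    have "(\<Sum>i<n. (\<Sum>j<n. adj E i j) * (\<Sum>j<n. nadj E i j))
        = (\<Sum>i<n. (N - 1) * real (degree n E i) - (real (degree n E i))^2)"
      unfolding N_def by (rule sum.cong) (auto simp: nadj_sum[OF sg] degree_sum[symmetric] power2_eq_square algebra_simps)
    also have "\<dots> = (N - 1) * (2 * m) - S" unfolding S_def using hs by (simp add: sum_subtractf sum_distrib_left[symmetric])
    finally show ?thesis .
  qed
  have "2 * m * (N * (N - 1) - 2 * m) \<le> 2 * (N - 1) * ((N - 1) * (2 * m) - S)"
    using core unfolding s1 s2 s3 N_def .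
  hence "(N - 1) * S \<le> (N - 1) * (m * (N - 2)) + 2 * m^2"
    by (simp add: power2_eq_square algebra_simps)
  hence "S \<le> m * (N - 2) + 2 * m^2 / (N - 1)" using N2 by (simp add: field_simps)
  thus ?thesis unfolding S_def m_def N_def .
qed

lemma maxmin_deg:
  assumes n: "n \<ge> 1"
  shows "\<And>i. i < n \<Longrightarrow> degree n E i \<le> max_degree n E"
    "\<And>i. i < n \<Longrightarrow> min_degree n E \<le> degree n E i"
    "\<exists>p<n. max_degree n E = degree n E p"
    "\<exists>q<n. min_degree n E = degree n E q"
proof -
  have fin: "finite (degree n E ` {0..<n})" and ne: "degree n E ` {0..<n} \<noteq> {}" using n by auto
  show "\<And>i. i < n \<Longrightarrow> degree n E i \<le> max_degree n E" unfolding max_degree_def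
    using fin by (intro Max_ge) auto
  show "\<And>i. i < n \<Longrightarrow> min_degree n E \<le> degree n E i" unfolding min_degree_def
    using fin by (intro Min_le) auto
  have "max_degree n E \<in> degree n E ` {0..<n}" unfolding max_degree_def using fin ne by (rule Max_in)
  thus "\<exists>p<n. max_degree n E = degree n E p" by auto
  have "min_degree n E \<in> degree n E ` {0..<n}" unfolding min_degree_def using fin ne by (rule Min_in)
  thus "\<exists>q<n. min_degree n E = degree n E q" by auto
qed

lemma spread:
  assumes sg: "simple_graph n E" and n2: "n \<ge> 2"
  shows "(real (max_degree n E) - real (min_degree n E))^2 / 2 \<le>
     (\<Sum>i<n. (real (degree n E i))^2) - 4 * (real (num_edges n E))^2 / real n"
proof -
  define N where "N = real n"
  define m where "m = real (num_edges n E)"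
  define d where "d i = real (degree n E i)" for i
  define a where "a = 2 * m / N"
  have N2: "N \<ge> 2" using n2 unfolding N_def by simp
  have hs: "(\<Sum>i<n. d i) = 2 * m" using handshake[OF sg] unfolding m_def d_def .
  have "(\<Sum>i<n. (d i - a)^2) = (\<Sum>i<n. (d i)^2 - 2 * a * d i + a^2)"
    by (rule sum.cong) (auto simp: power2_eq_square algebra_simps)
  also have "\<dots> = (\<Sum>i<n. (d i)^2) - 2 * a * (2 * m) + N * a^2"
    unfolding N_def by (simp add: sum.distrib sum_subtractf sum_distrib_left[symmetric] hs)
  also have "\<dots> = (\<Sum>i<n. (d i)^2) - 4 * m^2 / N" unfolding a_def using N2 by (simp add: power2_eq_square field_simps)
  finally have var: "(\<Sum>i<n. (d i - a)^2) = (\<Sum>i<n. (d i)^2) - 4 * m^2 / N" .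
  obtain p where p: "p < n" "max_degree n E = degree n E p" using maxmin_deg(3)[where n=n and E=E] n2 by auto
  obtain q where q: "q < n" "min_degree n E = degree n E q" using maxmin_deg(4)[where n=n and E=E] n2 by auto
  have "(d p - d q)^2 / 2 \<le> (\<Sum>i<n. (d i - a)^2)"
  proof (cases "p = q")
    case True
    then show ?thesis by (simp add: sum_nonneg)
  next
    case False
    have "(d p - d q)^2 / 2 \<le> (d p - a)^2 + (d q - a)^2"
    proof -
      have "(d p - a)^2 + (d q - a)^2 = (d p - d q)^2 / 2 + (d p + d q - 2 * a)^2 / 2"
        by (simp add: power2_eq_square field_simps)
      thus ?thesis using zero_le_power2[of "d p + d q - 2 * a"] by linarith
    qed
    also have "\<dots> = (\<Sum>i\<in>{p,q}. (d i - a)^2)" using False by simp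
    also have "\<dots> \<le> (\<Sum>i<n. (d i - a)^2)" using p q by (intro sum_mono2) auto
    finally show ?thesis .
  qed
  thus ?thesis using var p q unfolding d_def m_def N_def by simp
qed

lemma gamma_le:
  assumes sz: "size G = n" and n: "n \<ge> 1" and y: "y \<in># G"
  shows "rev (sorted_list_of_multiset G) ! (n - 1) \<le> (y :: real)"
proof -
  define ys where "ys = sorted_list_of_multiset G"
  have len: "length ys = n" unfolding ys_def using sz by (metis size_mset mset_sorted_list_of_multiset)
  have "rev ys ! (n - 1) = ys ! 0" using len n by (simp add: rev_nth)
  moreover have "y \<in> set ys" unfolding ys_def using y by simp
  then obtain j where j: "j < length ys" "ys ! j = y" by (auto simp: in_set_conv_nth)
  moreover have "sorted ys" unfolding ys_def by simp
  ultimately show ?thesis unfolding ys_def[symmetric] by (metis sorted_nth_mono zero_le)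
qed

lemma slap:
  assumes sg: "simple_graph n E"
  shows "signless_laplacian n E \<in> carrier_mat n n"
    "\<And>i j. i < n \<Longrightarrow> j < n \<Longrightarrow> signless_laplacian n E $$ (i,j) = signless_laplacian n E $$ (j,i)"
    "(\<Sum>i<n. signless_laplacian n E $$ (i,i)) = (\<Sum>i<n. real (degree n E i))"
    "(\<Sum>i<n. \<Sum>j<n. (signless_laplacian n E $$ (i,j))^2) = (\<Sum>i<n. (real (degree n E i))^2) + (\<Sum>i<n. real (degree n E i))"
proof -
  let ?Q = "signless_laplacian n E"
  have ix: "?Q $$ (i,j) = (if i = j then real (degree n E i) else 0) + adj E i j" if "i < n" "j < n" for i j
    unfolding signless_laplacian_def adj_def using that by simp
  show "?Q \<in> carrier_mat n n" unfolding signless_laplacian_def by simp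
  show "\<And>i j. i < n \<Longrightarrow> j < n \<Longrightarrow> ?Q $$ (i,j) = ?Q $$ (j,i)"
    using sg unfolding ix simple_graph_def adj_def by (auto simp: ix adj_def)
  have irr: "adj E i i = 0" if "i < n" for i using sg that unfolding simple_graph_def adj_def by auto
  show "(\<Sum>i<n. ?Q $$ (i,i)) = (\<Sum>i<n. real (degree n E i))"
    by (rule sum.cong) (auto simp: ix irr)
  have row: "(\<Sum>j<n. (?Q $$ (i,j))^2) = (real (degree n E i))^2 + real (degree n E i)" if i: "i < n" for i
  proof -
    have "(?Q $$ (i,j))^2 = (if j = i then (real (degree n E i))^2 else 0) + adj E i j" if j: "j < n" for j
      using i j irr[OF i] by (auto simp: ix adj_def power2_eq_square)
    hence "(\<Sum>j<n. (?Q $$ (i,j))^2) = (\<Sum>j<n. (if j = i then (real (degree n E i))^2 else 0) + adj E i j)"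
      by (intro sum.cong) auto
    also have "\<dots> = (real (degree n E i))^2 + real (degree n E i)"
      using i by (simp add: sum.distrib sum.delta degree_sum)
    finally show ?thesis .
  qed
  show "(\<Sum>i<n. \<Sum>j<n. (?Q $$ (i,j))^2) = (\<Sum>i<n. (real (degree n E i))^2) + (\<Sum>i<n. real (degree n E i))"
    by (simp add: row sum.distrib)
qed

lemma sum2: "(\<Sum>i<(2::nat). f i) = f 0 + (f 1 :: real)"
  by (simp add: numeral_2_eq_2)
lemma sum3: "(\<Sum>i<(3::nat). f i) = f 0 + f 1 + (f 2 :: real)"
  by (simp add: eval_nat_numeral)
lemma deg2: "n = 2 \<Longrightarrow> real (degree n E i) = adj E i 0 + adj E i 1"
  by (simp add: degree_sum sum2)
lemma deg3: "n = 3 \<Longrightarrow> real (degree n E i) = adj E i 0 + adj E i 1 + adj E i 2"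
  by (simp add: degree_sum sum3)
lemma lt3: "(i::nat) < 3 \<longleftrightarrow> i = 0 \<or> i = 1 \<or> i = 2" by auto
lemma lt2: "(i::nat) < 2 \<longleftrightarrow> i = 0 \<or> i = 1" by auto

theorem mainTheorem8:
  fixes n :: nat and E :: "nat \<Rightarrow> nat \<Rightarrow> bool"
  defines "m \<equiv> num_edges n E"
  defines "c \<equiv> real m * ((real n)^3 - (real n)^2 - 2 * real m * real n + 4 * real m)"
  assumes "simple_graph n E" and "connected_graph n E"
    and "n \<ge> 2" and "m \<ge> 1"
    and "gamma n E n \<ge> sqrt c / (2 * real n)"
  shows "QE n E \<ge> 2 * sqrt 2 / 3 *
            sqrt ((2 * real m + (real (max_degree n E) - real (min_degree n E))^2 / 2) * real n)
       \<and> (QE n E = 2 * sqrt 2 / 3 *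
            sqrt ((2 * real m + (real (max_degree n E) - real (min_degree n E))^2 / 2) * real n)
          \<longleftrightarrow> graph_iso n E 3 complete_graph)"
proof -
  have sg: "simple_graph n E" and n2: "n \<ge> 2" and m1: "m \<ge> 1"
    and hypg: "gamma n E n \<ge> sqrt c / (2 * real n)" using assms by auto
  have m_eq: "m = num_edges n E" using m_def by simp
  have c_eq: "c = real m * ((real n)^3 - (real n)^2 - 2 * real m * real n + 4 * real m)" using c_def by simp
  define K where "K = 2 * real m + (real (max_degree n E) - real (min_degree n E))^2 / 2"
  define R where "R = 2 * sqrt 2 / 3 * sqrt (K * real n)"
  define S where "S = (\<Sum>i<n. (real (degree n E i))^2)"
  define a where "a = 2 * real m / real n"
  define M where "M = S + 2 * real m - 4 * (real m)^2 / real n"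
  define t where "t = sqrt c / (2 * real n)"
  let ?Q = "signless_laplacian n E"
  have hs: "(\<Sum>i<n. real (degree n E i)) = 2 * real m" using handshake[OF sg] unfolding m_eq .
  note sp = sym_spectrum[OF slap(1)[OF sg] slap(2)[OF sg]]
  have X: "sl_eigenvalues n E = real_spectrum ?Q" unfolding sl_eigenvalues_def ..
  obtain xs where xs: "mset xs = sl_eigenvalues n E" using ex_mset by blast
  have len: "length xs = n" using sp(1) xs X by (metis size_mset)
  define e where "e i = xs ! i" for i
  have sum_xs: "sum_mset (image_mset f (sl_eigenvalues n E)) = (\<Sum>i<n. f (e i))" for f :: "real \<Rightarrow> real"
    unfolding xs[symmetric] e_def mset_map[symmetric] sum_mset_sum_list sum_list_sum_nth
    by (simp add: len atLeast0LessThan)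
  have s1: "(\<Sum>i<n. e i) = 2 * real m"
    using sum_xs[of "\<lambda>x. x"] sp(2) slap(3)[OF sg] hs X by simp
  have s2: "(\<Sum>i<n. (e i)^2) = S + 2 * real m"
    using sum_xs[of "\<lambda>x. x^2"] sp(3) slap(4)[OF sg] hs X unfolding S_def by simp
  have QEe: "QE n E = (\<Sum>i<n. \<bar>e i - a\<bar>)"
    unfolding QE_def gamma_mset_def sum_xs a_def m_eq ..
  have hyp: "t \<le> \<bar>e i - a\<bar>" if i: "i < n" for i
  proof -
    have sz: "size (gamma_mset n E) = n" unfolding gamma_mset_def using sp(1) X by simp
    have "e i \<in># sl_eigenvalues n E" unfolding xs[symmetric] e_def using i len by simp
    hence "\<bar>e i - a\<bar> \<in># gamma_mset n E" unfolding gamma_mset_def a_def m_eq by simp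
    from gamma_le[OF sz _ this] n2 have "gamma n E n \<le> \<bar>e i - a\<bar>" unfolding gamma_def by simp
    thus ?thesis using hypg unfolding t_def by simp
  qed
  have dc: "S \<le> real m * (real n - 2) + 2 * (real m)^2 / (real n - 1)"
    using de_caen[OF sg n2] unfolding S_def m_eq .
  have KM: "K \<le> M" using spread[OF sg n2] unfolding K_def M_def S_def m_eq by simp
  have K0: "0 \<le> K" unfolding K_def by simp
  have mle: "2 * real m \<le> real n * (real n - 1)"
  proof -
    have "(\<Sum>i<n. real (degree n E i)) \<le> (\<Sum>i<n. real n - 1)" by (intro sum_mono deg_le[OF sg]) auto
    thus ?thesis using hs by simp
  qed
  have m1r: "real m \<ge> 1" using m1 by simp
  note core = core_ineq[OF a_def M_def c_eq t_def QEe R_def n2 s1 s2 dc KM K0 m1r mle]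
  have C1: "\<forall>i<n. \<bar>e i - a\<bar> \<le> 2 * t" by (rule core(1)) (auto intro: hyp)
  have main1: "R \<le> QE n E" by (rule core(2)) (auto intro: hyp)
  have C3: "M = K \<and> n \<le> 3 \<and> M = c / (2 * real n)" if "QE n E = R" by (rule core(3)) (auto intro: hyp that)
  have dsum: "real (degree n E i) = (\<Sum>j<n. adj E i j)" for i by (rule degree_sum)
  have symE: "E i j \<longleftrightarrow> E j i" if "i < n" "j < n" for i j using sg that unfolding simple_graph_def by auto
  have irrE: "\<not> E i i" if "i < n" for i using sg that unfolding simple_graph_def by auto
  have iff: "QE n E = R \<longleftrightarrow> graph_iso n E 3 complete_graph"
  proof
    assume eq: "QE n E = R"
    from C3[OF eq] have MK: "M = K" and n3: "n \<le> 3" and Mc: "M = c / (2 * real n)" by auto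
    have "n = 2 \<or> n = 3" using n2 n3 by auto
    thus "graph_iso n E 3 complete_graph"
    proof
      assume n2': "n = 2"
      have d0: "real (degree n E 0) = adj E 0 1" unfolding deg2[OF n2'] using irrE[of 0] n2' by (simp add: adj_def)
      have d1: "real (degree n E 1) = adj E 0 1" unfolding deg2[OF n2'] using irrE[of 1] symE[of 0 1] n2' by (simp add: adj_def)
      have "2 * real m = 2 * adj E 0 1" using hs d0 d1 n2' by (simp add: sum2)
      hence mx: "real m = adj E 0 1" by simp
      hence m1': "real m = 1" using m1r unfolding adj_def by (auto split: if_splits)
      have "S = 2" unfolding S_def n2' sum2 using d0 d1 mx m1' n2' by simp
      hence "M = 2" unfolding M_def using m1' n2' by simp
      moreover have "c / (2 * real n) = 1" unfolding c_eq using m1' n2' by simp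
      ultimately show ?thesis using Mc by simp
    next
      assume n3': "n = 3"
      define x where "x = adj E 0 1"
      define y where "y = adj E 0 2"
      define z where "z = adj E 1 2"
      have d0: "real (degree n E 0) = x + y" unfolding deg3[OF n3'] x_def y_def using irrE[of 0] n3' by (simp add: adj_def)
      have d1: "real (degree n E 1) = x + z" unfolding deg3[OF n3'] x_def z_def using irrE[of 1] symE[of 1 0] n3' by (simp add: adj_def)
      have d2: "real (degree n E 2) = y + z" unfolding deg3[OF n3'] y_def z_def using irrE[of 2] symE[of 2 0] symE[of 2 1] n3' by (simp add: adj_def)
      have mm: "real m = x + y + z" using hs d0 d1 d2 n3' by (simp add: sum3)
      have xyz: "x \<in> {0,1}" "y \<in> {0,1}" "z \<in> {0,1}" unfolding x_def y_def z_def adj_def by auto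
      have n1: "n \<ge> 1" using n3' by simp
      obtain p where p: "p < n" "max_degree n E = degree n E p" using maxmin_deg(3)[OF n1, where E=E] by auto
      obtain q where q: "q < n" "min_degree n E = degree n E q" using maxmin_deg(4)[OF n1, where E=E] by auto
      have Dge: "real (degree n E i) \<le> real (max_degree n E)" if "i < n" for i
        using maxmin_deg(1)[OF n1 that, where E=E] by simp
      have dle: "real (min_degree n E) \<le> real (degree n E i)" if "i < n" for i
        using maxmin_deg(2)[OF n1 that, where E=E] by simp
      have Din: "real (max_degree n E) = x + y \<or> real (max_degree n E) = x + z \<or> real (max_degree n E) = y + z"
        using p d0 d1 d2 n3' by (auto simp: lt3)
      have din: "real (min_degree n E) = x + y \<or> real (min_degree n E) = x + z \<or> real (min_degree n E) = y + z"
        using q d0 d1 d2 n3' by (auto simp: lt3)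
      have eqK: "(x + y)^2 + (x + z)^2 + (y + z)^2 + 2 * (x + y + z) - 4 * (x + y + z)^2 / 3
             = 2 * (x + y + z) + (real (max_degree n E) - real (min_degree n E))^2 / 2"
        using MK unfolding M_def K_def S_def n3' sum3 using d0 d1 d2 mm n3' by simp
      have all: "x = 1 \<and> y = 1 \<and> z = 1"
        by (rule three_case[OF xyz _ _ _ Din _ _ _ din _ eqK])
           (use Dge[of 0] Dge[of 1] Dge[of 2] dle[of 0] dle[of 1] dle[of 2] d0 d1 d2 n3' mm m1r in auto)
      hence E3: "E 0 1" "E 0 2" "E 1 2" unfolding x_def y_def z_def adj_def by (auto split: if_splits)
      have "\<forall>i<n. \<forall>j<n. E i j \<longleftrightarrow> complete_graph (id i) (id j)"
        unfolding complete_graph_def n3' lt3 using E3 irrE symE n3' by auto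
      moreover have "bij_betw id {0..<n} {0..<3}" using n3' by simp
      ultimately show ?thesis unfolding graph_iso_def by blast
    qed
  next
    assume "graph_iso n E 3 complete_graph"
    then obtain f where f: "bij_betw f {0..<n} {0..<3}" and fE: "\<forall>i<n. \<forall>j<n. E i j \<longleftrightarrow> complete_graph (f i) (f j)"
      unfolding graph_iso_def by blast
    have n3': "n = 3" using bij_betw_same_card[OF f] by simp
    have Eiff: "E i j \<longleftrightarrow> i \<noteq> j" if "i < n" "j < n" for i j
    proof -
      have "inj_on f {0..<n}" using f by (rule bij_betw_imp_inj_on)
      hence "f i = f j \<longleftrightarrow> i = j" using that by (auto dest: inj_onD)
      thus ?thesis using fE that unfolding complete_graph_def by auto
    qed
    have dd: "real (degree n E i) = 2" if "i < n" for i
      using that Eiff[of i 0] Eiff[of i 1] Eiff[of i 2] unfolding deg3[OF n3'] by (auto simp: adj_def n3' lt3)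
    have mm: "real m = 3" using hs dd n3' by (simp add: sum3)
    have S12: "S = 12" unfolding S_def n3' sum3 using dd n3' by simp
    have n1: "n \<ge> 1" using n3' by simp
    obtain p where p: "p < n" "max_degree n E = degree n E p" using maxmin_deg(3)[OF n1, where E=E] by auto
    obtain q where q: "q < n" "min_degree n E = degree n E q" using maxmin_deg(4)[OF n1, where E=E] by auto
    have K6: "K = 6" unfolding K_def using p q dd mm by simp
    have c36: "c = 36" unfolding c_eq mm n3' by simp
    have t1: "t = 1" unfolding t_def c36 n3' by simp
    have "sqrt (6 * 3) = sqrt (3^2 * 2)" by simp
    also have "\<dots> = 3 * sqrt 2" unfolding real_sqrt_mult real_sqrt_abs by simp
    finally have "sqrt (6 * 3) = 3 * sqrt 2" .
    hence R4: "R = 4" unfolding R_def K6 n3' by simp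
    have a2: "a = 2" unfolding a_def mm n3' by simp
    have s0: "(e 0 - a) + (e 1 - a) + (e 2 - a) = 0" using s1 mm a2 n3' by (simp add: sum3)
    have "\<bar>e 0 - a\<bar> + \<bar>e 1 - a\<bar> + \<bar>e 2 - a\<bar> \<le> 4"
      by (rule k3_sum[OF s0]) (use hyp C1 t1 n3' in auto)
    moreover have "QE n E = \<bar>e 0 - a\<bar> + \<bar>e 1 - a\<bar> + \<bar>e 2 - a\<bar>" using QEe sum3[of "\<lambda>i. \<bar>e i - a\<bar>"] n3' by simp
    ultimately have "QE n E \<le> 4" by simp
    thus "QE n E = R" using main1 R4 by simp
  qed
  show ?thesis using main1 iff unfolding R_def K_def by simp
qed

end
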